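(* Let $D$ be a database, $R$ a regular expression and $\mathcal{A}$ any automaton with $L(R)=L(\mathcal{A})$. Let $s,t$ be vertices of $D$ and let $P$ be the set of walks of $\llbracket\mathcal{A}\rrbracket_W(D)$ going from $s$ to $t$. If $w\in P$ has minimal length in $P$, then $w\in\llbracket R\rrbracket_{BT}(D)$.
   Context: A database is $D=(\Sigma,V,E,\mathrm{src},\mathrm{tgt},\mathrm{lbl})$ with finite alphabet $\Sigma$, finite vertex set $V$, finite edge set $E$, $\mathrm{src},\mathrm{tgt}:E\to V$, $\mathrm{lbl}:E\to2^\Sigma$; a walk is $(n_0,e_0,\dots,e_{k-1},n_k)$ with $\mathrm{src}(e_i)=n_i$, $\mathrm{tgt}(e_i)=n_{i+1}$, of length $k$, with $\mathrm{lbl}(w)=\{u_0\cdots u_{k-1}:u_i\in\mathrm{lbl}(e_i)\}$. For an automaton $\mathcal{A}$, the walk semantics $\llbracket\mathcal{A}\rrbracket_W(D)$ consists of the walks $w$ of $D$ with $\mathrm{lbl}(w)\cap L(\mathcal{A})\ne\emptyset$ (as projections of runs of the product $D\times\mathcal{A}$). Regular expressions: $R::=\varepsilon\mid a\mid R^*\mid R\cdot R\mid R+R$. A linearisation $R'$ of $R$ replaces each atom occurrence by a distinct fresh symbol (position) of an alphabet $\Gamma$; $\overline\alpha\in\Sigma$ denotes the original letter of position $\alpha$. A binding trail of $D$ matching $R$ is a sequence $(e_1,\alpha_1)\cdots(e_n,\alpha_n)\in(E\times\Gamma)^*$ with $e_1\cdots e_n$ a walk of $D$, $\overline{\alpha_1\cdots\alpha_n}\in\mathrm{lbl}(e_1\cdots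 e_n)$, $\alpha_1\cdots\alpha_n\in L(R')$, and the pairs $(e_i,\alpha_i)$ pairwise distinct. $\llbracket R\rrbracket_{BT}(D)$ is the bag of the walks $e_1\cdots e_n$ underlying binding trails of $D$ matching $R$. *)

theory Defs
  imports Main
begin

record ('a, 'v, 'e) db =
  alph  :: "'a set"
  verts :: "'v set"
  edges :: "'e set"
  src   :: "'e \<Rightarrow> 'v"
  tgt   :: "'e \<Rightarrow> 'v"
  lbl   :: "'e \<Rightarrow> 'a set"

definition wf_db :: "('a, 'v, 'e) db \<Rightarrow> bool" where
  "wf_db D \<longleftrightarrow> finite (alph D) \<and> finite (verts D) \<and> finite (edges D) \<and>
     (\<forall>e\<in>edges D. src D e \<in> verts D \<and> tgt D e \<in> verts D \<and> lbl D e \<subseteq> alph D)"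

text \<open>A walk (n0, e0, ..., e_{k-1}, n_k) is represented by its start vertex n0 and its
  edge list [e0, ..., e_{k-1}]; the intermediate vertices are determined by src/tgt.\<close>
type_synonym ('v, 'e) walk = "'v \<times> 'e list"

fun chain :: "('a, 'v, 'e) db \<Rightarrow> 'v \<Rightarrow> 'e list \<Rightarrow> bool" where
  "chain D n [] = True"
| "chain D n (e # es) = (src D e = n \<and> chain D (tgt D e) es)"

definition is_walk :: "('a, 'v, 'e) db \<Rightarrow> ('v, 'e) walk \<Rightarrow> bool" where
  "is_walk D w \<longleftrightarrow> fst w \<in> verts D \<and> set (snd w) \<subseteq> edges D \<and> chain D (fst w) (snd w)"

definition walk_src :: "('v, 'e) walk \<Rightarrow> 'v" where
  "walk_src w = fst w"

definition walk_tgt :: "('a, 'v, 'e) db \<Rightarrow> ('v, 'e) walk \<Rightarrow> 'v" where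
  "walk_tgt D w = (if snd w = [] then fst w else tgt D (last (snd w)))"

definition walk_len :: "('v, 'e) walk \<Rightarrow> nat" where
  "walk_len w = length (snd w)"

definition lbl_edges :: "('a, 'v, 'e) db \<Rightarrow> 'e list \<Rightarrow> 'a list set" where
  "lbl_edges D es = {us. list_all2 (\<lambda>u e. u \<in> lbl D e) us es}"

definition lbl_walk :: "('a, 'v, 'e) db \<Rightarrow> ('v, 'e) walk \<Rightarrow> 'a list set" where
  "lbl_walk D w = lbl_edges D (snd w)"

record ('q, 'a) nfa =
  states :: "'q set"
  init   :: "'q set"
  final  :: "'q set"
  trans  :: "('q \<times> 'a \<times> 'q) set"

definition wf_nfa :: "('q, 'a) nfa \<Rightarrow> bool" where
  "wf_nfa A \<longleftrightarrow> finite (states A) \<and> init A \<subseteq> states A \<and> final A \<subseteq> states A \<and>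
     finite (trans A) \<and> trans A \<subseteq> states A \<times> UNIV \<times> states A"

definition accepts :: "('q, 'a) nfa \<Rightarrow> 'a list \<Rightarrow> bool" where
  "accepts A u \<longleftrightarrow> (\<exists>qs. length qs = Suc (length u) \<and> hd qs \<in> init A \<and> last qs \<in> final A \<and>
     (\<forall>i<length u. (qs ! i, u ! i, qs ! Suc i) \<in> trans A))"

definition nfa_lang :: "('q, 'a) nfa \<Rightarrow> 'a list set" where
  "nfa_lang A = {u. accepts A u}"

definition walk_sem :: "('q, 'a) nfa \<Rightarrow> ('a, 'v, 'e) db \<Rightarrow> ('v, 'e) walk set" where
  "walk_sem A D = {w. is_walk D w \<and> lbl_walk D w \<inter> nfa_lang A \<noteq> {}}"

datatype 'a rexp = Eps | Atom 'a | Star "'a rexp" | Conc "'a rexp" "'a rexp" | Plus "'a rexp" "'a rexp"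

fun lang :: "'a rexp \<Rightarrow> 'a list set" where
  "lang Eps = {[]}"
| "lang (Atom a) = {[a]}"
| "lang (Star r) = {concat us | us. \<forall>u\<in>set us. u \<in> lang r}"
| "lang (Conc r s) = {u @ v | u v. u \<in> lang r \<and> v \<in> lang s}"
| "lang (Plus r s) = lang r \<union> lang s"

fun natoms :: "'a rexp \<Rightarrow> nat" where
  "natoms Eps = 0"
| "natoms (Atom a) = 1"
| "natoms (Star r) = natoms r"
| "natoms (Conc r s) = natoms r + natoms s"
| "natoms (Plus r s) = natoms r + natoms s"

text \<open>Linearisation: the atom occurrences are numbered left to right starting at n; the
  position alphabet is nat \<times> 'a, a position (i, a) being the i-th atom occurrence, whose
  original letter is a = snd (i, a). Distinct occurrences get distinct positions.\<close>
fun lin :: "nat \<Rightarrow> 'a rexp \<Rightarrow> (nat \<times> 'a) rexp" where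
  "lin n Eps = Eps"
| "lin n (Atom a) = Atom (n, a)"
| "lin n (Star r) = Star (lin n r)"
| "lin n (Conc r s) = Conc (lin n r) (lin (n + natoms r) s)"
| "lin n (Plus r s) = Plus (lin n r) (lin (n + natoms r) s)"

definition linearise :: "'a rexp \<Rightarrow> (nat \<times> 'a) rexp" where
  "linearise R = lin 0 R"

text \<open>A binding trail, given with the start vertex of its underlying walk.\<close>
definition binding_trail ::
  "('a, 'v, 'e) db \<Rightarrow> 'a rexp \<Rightarrow> 'v \<Rightarrow> ('e \<times> (nat \<times> 'a)) list \<Rightarrow> bool" where
  "binding_trail D R n bt \<longleftrightarrow>
     is_walk D (n, map fst bt) \<and>
     map snd (map snd bt) \<in> lbl_edges D (map fst bt) \<and>
     map snd bt \<in> lang (linearise R) \<and>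
     distinct bt"

text \<open>Support of the bag [[R]]_BT(D): walks underlying some binding trail matching R.\<close>
definition bt_sem :: "'a rexp \<Rightarrow> ('a, 'v, 'e) db \<Rightarrow> ('v, 'e) walk set" where
  "bt_sem R D = {(n, map fst bt) | n bt. binding_trail D R n bt}"

end

theory Submission
  imports Defs
begin

fun atoms :: "'a rexp \<Rightarrow> 'a set" where
  "atoms Eps = {}"
| "atoms (Atom a) = {a}"
| "atoms (Star r) = atoms r"
| "atoms (Conc r s) = atoms r \<union> atoms s"
| "atoms (Plus r s) = atoms r \<union> atoms s"

fun linok :: "'a rexp \<Rightarrow> bool" where
  "linok Eps = True"
| "linok (Atom a) = True"
| "linok (Star r) = linok r"
| "linok (Conc r s) = (linok r \<and> linok s \<and> atoms r \<inter> atoms s = {})"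
| "linok (Plus r s) = (linok r \<and> linok s \<and> atoms r \<inter> atoms s = {})"

lemma conc_in: "u \<in> lang r \<Longrightarrow> v \<in> lang s \<Longrightarrow> u @ v \<in> lang (Conc r s)"
  unfolding lang.simps by blast

lemma lang_atoms: "u \<in> lang r \<Longrightarrow> set u \<subseteq> atoms r"
  by (induction r arbitrary: u) fastforce+

lemma atoms_lin: "atoms (lin n R) \<subseteq> {n..<n + natoms R} \<times> UNIV"
  by (induction R arbitrary: n) fastforce+

lemma linok_lin: "linok (lin n R)"
proof (induction R arbitrary: n)
  case (Conc r s)
  have "atoms (lin n r) \<inter> atoms (lin (n + natoms r) s) \<subseteq>
     ({n..<n + natoms r} \<times> UNIV) \<inter> ({n + natoms r..<n + natoms r + natoms s} \<times> UNIV)"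
    using atoms_lin[of n r] atoms_lin[of "n + natoms r" s] by auto
  moreover have "({n..<n + natoms r} \<times> UNIV) \<inter> ({n + natoms r..<n + natoms r + natoms s} \<times> (UNIV::'a set)) = {}"
    by auto
  ultimately have "atoms (lin n r) \<inter> atoms (lin (n + natoms r) s) = {}" by blast
  then show ?case using Conc by simp
next
  case (Plus r s)
  have "atoms (lin n r) \<inter> atoms (lin (n + natoms r) s) \<subseteq>
     ({n..<n + natoms r} \<times> UNIV) \<inter> ({n + natoms r..<n + natoms r + natoms s} \<times> UNIV)"
    using atoms_lin[of n r] atoms_lin[of "n + natoms r" s] by auto
  moreover have "({n..<n + natoms r} \<times> UNIV) \<inter> ({n + natoms r..<n + natoms r + natoms s} \<times> (UNIV::'a set)) = {}"
    by auto
  ultimately have "atoms (lin n r) \<inter> atoms (lin (n + natoms r) s) = {}" by blast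
  then show ?case using Plus by simp
qed auto

lemma ex_list_all2:
  assumes "\<forall>u\<in>set us. \<exists>a. P a u"
  shows "\<exists>as. list_all2 P as us"
  using assms
proof (induction us)
  case Nil then show ?case by auto
next
  case (Cons u us)
  then obtain a as where "P a u" "list_all2 P as us" by auto
  then show ?case by (intro exI[of _ "a # as"]) auto
qed

lemma concat_map_la2: "list_all2 (\<lambda>a u. map snd a = u) as us \<Longrightarrow> map snd (concat as) = concat us"
  by (induction rule: list_all2_induct) auto

lemma lift_lin: "u \<in> lang R \<Longrightarrow> \<exists>a \<in> lang (lin n R). map snd a = u"
proof (induction R arbitrary: u n)
  case (Star r)
  then obtain us where us: "u = concat us" "\<forall>x\<in>set us. x \<in> lang r" by auto
  then have "\<forall>x\<in>set us. \<exists>a. a \<in> lang (lin n r) \<and> map snd a = x" using Star.IH by blast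
  then obtain as where as: "list_all2 (\<lambda>a x. a \<in> lang (lin n r) \<and> map snd a = x) as us"
    using ex_list_all2[of us "\<lambda>a x. a \<in> lang (lin n r) \<and> map snd a = x"] by blast
  have "\<forall>a\<in>set as. a \<in> lang (lin n r)"
    using as by (induction rule: list_all2_induct) auto
  moreover have "map snd (concat as) = u"
  proof -
    have "list_all2 (\<lambda>a x. map snd a = x) as us" using as by (rule list_all2_mono) auto
    then show ?thesis using us(1) by (simp add: concat_map_la2)
  qed
  moreover have "concat as \<in> lang (lin n (Star r))"
    using calculation(1) by (simp only: lin.simps lang.simps mem_Collect_eq) blast
  ultimately show ?case by blast
next
  case (Conc r s)
  then obtain x y where "u = x @ y" "x \<in> lang r" "y \<in> lang s" by auto
  with Conc.IH obtain a b where "a \<in> lang (lin n r)" "map snd a = x"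
    "b \<in> lang (lin (n + natoms r) s)" "map snd b = y" by blast
  then show ?case using \<open>u = x @ y\<close> by (intro bexI[of _ "a @ b"]) auto
next
  case (Plus r s)
  from Plus.prems consider "u \<in> lang r" | "u \<in> lang s" by auto
  then show ?case
  proof cases
    case 1
    then obtain a where "a \<in> lang (lin n r)" "map snd a = u" using Plus.IH(1) by blast
    then show ?thesis by auto
  next
    case 2
    then obtain a where "a \<in> lang (lin (n + natoms r) s)" "map snd a = u" using Plus.IH(2) by blast
    then show ?thesis by auto
  qed
next
  case Eps then show ?case by simp
next
  case (Atom b) then show ?case by auto
qed

lemma split_concat:
  assumes "concat us = x @ c # y"
  shows "\<exists>k p q. k < length us \<and> us ! k = p @ c # q \<and> x = concat (take k us) @ p
      \<and> y = q @ concat (drop (Suc k) us)"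
  using assms
proof (induction us arbitrary: x)
  case Nil then show ?case by simp
next
  case (Cons v us)
  from Cons.prems have eq: "v @ concat us = x @ c # y" by simp
  then obtain m where m: "(v = x @ m \<and> m @ concat us = c # y) \<or> (v @ m = x \<and> concat us = m @ c # y)"
    by (auto simp: append_eq_append_conv2)
  then show ?case
  proof
    assume h: "v = x @ m \<and> m @ concat us = c # y"
    show ?case
    proof (cases m)
      case Nil
      with h have "concat us = [] @ c # y" by simp
      from Cons.IH[OF this] obtain k p q where kpq: "k < length us" "us ! k = p @ c # q"
        "[] = concat (take k us) @ p" "y = q @ concat (drop (Suc k) us)" by blast
      then show ?thesis using h Nil
        by (intro exI[of _ "Suc k"] exI[of _ p] exI[of _ q]) auto
    next
      case (Cons c' q0)
      with h show ?thesis
        by (intro exI[of _ 0] exI[of _ x] exI[of _ q0]) auto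
    qed
  next
    assume h: "v @ m = x \<and> concat us = m @ c # y"
    from Cons.IH[of m] h obtain k p q where kpq: "k < length us" "us ! k = p @ c # q"
        "m = concat (take k us) @ p" "y = q @ concat (drop (Suc k) us)" by blast
    then show ?thesis using h
      by (intro exI[of _ "Suc k"] exI[of _ p] exI[of _ q]) auto
  qed
qed

lemma exchange:
  "linok r \<Longrightarrow> x @ c # y \<in> lang r \<Longrightarrow> x' @ c # y' \<in> lang r \<Longrightarrow> x @ c # y' \<in> lang r"
proof (induction r arbitrary: x y x' y')
  case Eps then show ?case by simp
next
  case (Atom b) then show ?case by (cases x; cases x') auto
next
  case (Plus r s)
  have c1: "c \<in> atoms r" if "x @ c # y \<in> lang r" for x y using lang_atoms[OF that] by auto
  have c2: "c \<in> atoms s" if "x @ c # y \<in> lang s" for x y using lang_atoms[OF that] by auto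
  have lr: "linok r" and ls: "linok s" and dis: "atoms r \<inter> atoms s = {}" using Plus.prems(1) by auto
  consider "x @ c # y \<in> lang r" | "x @ c # y \<in> lang s" using Plus.prems(2) by auto
  then show ?case
  proof cases
    case 1
    have "c \<in> atoms r" using c1[OF 1] .
    then have "x' @ c # y' \<notin> lang s" using c2 dis by blast
    then have "x' @ c # y' \<in> lang r" using Plus.prems(3) by simp
    then show ?thesis using Plus.IH(1)[OF lr 1] by simp
  next
    case 2
    have "c \<in> atoms s" using c2[OF 2] .
    then have "x' @ c # y' \<notin> lang r" using c1 dis by blast
    then have "x' @ c # y' \<in> lang s" using Plus.prems(3) by simp
    then show ?thesis using Plus.IH(2)[OF ls 2] by simp
  qed
next
  case (Conc r s)
  from Conc.prems(2) obtain u v where uv: "x @ c # y = u @ v" "u \<in> lang r" "v \<in> lang s" by auto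
  from Conc.prems(3) obtain u' v' where uv': "x' @ c # y' = u' @ v'" "u' \<in> lang r" "v' \<in> lang s" by auto
  have dis: "atoms r \<inter> atoms s = {}" using Conc.prems(1) by simp
  from uv(1) obtain m where m: "(x = u @ m \<and> m @ c # y = v) \<or> (x @ m = u \<and> c # y = m @ v)"
    by (auto simp: append_eq_append_conv2)
  from uv'(1) obtain m' where m': "(x' = u' @ m' \<and> m' @ c # y' = v') \<or> (x' @ m' = u' \<and> c # y' = m' @ v')"
    by (auto simp: append_eq_append_conv2)
  consider (rr) y1 y1' where "x @ c # y1 \<in> lang r" "y = y1 @ v" "x' @ c # y1' \<in> lang r" "y' = y1' @ v'"
    | (ss) "x = u @ m" "m @ c # y \<in> lang s" "x' = u' @ m'" "m' @ c # y' \<in> lang s"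
    | (rs) "c \<in> atoms r" "c \<in> atoms s"
  proof -
    have A: "(\<exists>y1. x @ c # y1 = u \<and> y = y1 @ v) \<or> (x = u @ m \<and> m @ c # y = v)"
      using m by (cases m) auto
    have B: "(\<exists>y1. x' @ c # y1 = u' \<and> y' = y1 @ v') \<or> (x' = u' @ m' \<and> m' @ c # y' = v')"
      using m' by (cases m') auto
    show thesis
    proof (cases "x = u @ m \<and> m @ c # y = v")
      case True
      note T = True
      show thesis
      proof (cases "x' = u' @ m' \<and> m' @ c # y' = v'")
        case True
        then show thesis using T that(2) uv(3) uv'(3) by simp
      next
        case False
        then obtain y1 where "x' @ c # y1 = u'" using B by auto
        then have "c \<in> atoms r" using uv'(2) lang_atoms[of u' r] by auto
        moreover have "c \<in> atoms s" using T uv(3) lang_atoms[of v s] by auto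
        ultimately show thesis using that(3) by blast
      qed
    next
      case False
      then obtain y1 where y1: "x @ c # y1 = u" "y = y1 @ v" using A by auto
      show thesis
      proof (cases "x' = u' @ m' \<and> m' @ c # y' = v'")
        case True
        then have "c \<in> atoms s" using uv'(3) lang_atoms[of v' s] by auto
        moreover have "c \<in> atoms r" using y1 uv(2) lang_atoms[of u r] by auto
        ultimately show thesis using that(3) by blast
      next
        case False
        then obtain y1' where y1': "x' @ c # y1' = u'" "y' = y1' @ v'" using B by auto
        show thesis by (rule that(1)[of y1 y1']) (use y1 y1' uv(2) uv'(2) in auto)
      qed
    qed
  qed
  then show ?case
  proof cases
    case rr
    have lr: "linok r" using Conc.prems(1) by simp
    have "x @ c # y1' \<in> lang r" using Conc.IH(1)[OF lr rr(1) rr(3)] .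
    then have "(x @ c # y1') @ v' \<in> lang (Conc r s)" using uv'(3) by (rule conc_in)
    then show ?thesis using rr(4) by simp
  next
    case ss
    have ls: "linok s" using Conc.prems(1) by simp
    have "m @ c # y' \<in> lang s" using Conc.IH(2)[OF ls ss(2) ss(4)] .
    then have "u @ (m @ c # y') \<in> lang (Conc r s)" using uv(2) conc_in by blast
    then show ?thesis using ss(1) by simp
  next
    case rs then show ?thesis using dis by auto
  qed
next
  case (Star r)
  from Star.prems(2) obtain us where us: "x @ c # y = concat us" "\<forall>u\<in>set us. u \<in> lang r" by auto
  from Star.prems(3) obtain us' where us': "x' @ c # y' = concat us'" "\<forall>u\<in>set us'. u \<in> lang r" by auto
  obtain k p q where k: "k < length us" "us ! k = p @ c # q" "x = concat (take k us) @ p"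
      "y = q @ concat (drop (Suc k) us)" using split_concat[OF us(1)[symmetric]] by blast
  obtain k' p' q' where k': "k' < length us'" "us' ! k' = p' @ c # q'" "x' = concat (take k' us') @ p'"
      "y' = q' @ concat (drop (Suc k') us')" using split_concat[OF us'(1)[symmetric]] by blast
  have h1: "p @ c # q \<in> lang r" using k us(2) by (metis nth_mem)
  have h2: "p' @ c # q' \<in> lang r" using k' us'(2) by (metis nth_mem)
  have lr: "linok r" using Star.prems(1) by simp
  have pq: "p @ c # q' \<in> lang r" using Star.IH[OF lr h1 h2] .
  define vs where "vs = take k us @ [p @ c # q'] @ drop (Suc k') us'"
  have "\<forall>u\<in>set vs. u \<in> lang r" unfolding vs_def using pq us(2) us'(2)
    by (auto dest: in_set_takeD in_set_dropD)
  moreover have "x @ c # y' = concat vs" unfolding vs_def using k k' by simp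
  ultimately show ?case unfolding lang.simps by blast
qed

lemma cut:
  assumes "linok r" "x @ c # y @ c # z \<in> lang r"
  shows "x @ c # z \<in> lang r"
  using exchange[OF assms(1), where x=x and y="y @ c # z" and x'="x @ c # y" and y'=z] assms by simp

lemma lower_lin: "a \<in> lang (lin n R) \<Longrightarrow> map snd a \<in> lang R"
proof (induction R arbitrary: a n)
  case (Star r)
  then obtain as where as: "a = concat as" "\<forall>x\<in>set as. x \<in> lang (lin n r)" by auto
  then have "\<forall>x\<in>set (map (map snd) as). x \<in> lang r" using Star.IH by auto
  moreover have "map snd a = concat (map (map snd) as)" using as(1) by (simp add: map_concat)
  ultimately have "\<exists>us. map snd a = concat us \<and> (\<forall>u\<in>set us. u \<in> lang r)" by blast
  then show ?case by simp
next
  case Eps then show ?case by simp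
next
  case (Atom b) then show ?case by auto
next
  case (Conc r s)
  then obtain x y where xy: "a = x @ y" "x \<in> lang (lin n r)" "y \<in> lang (lin (n + natoms r) s)" by auto
  have "map snd x \<in> lang r" using Conc.IH(1)[OF xy(2)] .
  moreover have "map snd y \<in> lang s" using Conc.IH(2)[OF xy(3)] .
  ultimately have "map snd x @ map snd y \<in> lang (Conc r s)" by (rule conc_in)
  then show ?case using xy(1) by simp
next
  case (Plus r s)
  then show ?case by auto
qed

lemma chain_append:
  "chain D n (xs @ ys) = (chain D n xs \<and> chain D (if xs = [] then n else tgt D (last xs)) ys)"
  by (induction xs arbitrary: n) auto

lemma chain_split:
  "chain D n (xs @ e # ys) = (chain D n (xs @ [e]) \<and> chain D (tgt D e) ys)"
  by (induction xs arbitrary: n) auto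

lemma lbl_edges_bt:
  "(map snd (map snd b) \<in> lbl_edges D (map fst b)) = (\<forall>p\<in>set b. snd (snd p) \<in> lbl D (fst p))"
  unfolding lbl_edges_def by (induction b) auto

theorem proposition29:
  fixes D :: "('a, 'v, 'e) db" and R :: "'a rexp" and A :: "('q, 'a) nfa"
    and s t :: 'v and w :: "('v, 'e) walk"
  assumes "wf_db D" and "wf_nfa A" and "lang R = nfa_lang A"
    and "s \<in> verts D" and "t \<in> verts D"
    and "P = {w' \<in> walk_sem A D. walk_src w' = s \<and> walk_tgt D w' = t}"
    and "w \<in> P" and "\<forall>w'\<in>P. walk_len w \<le> walk_len w'"
  shows "w \<in> bt_sem R D"
proof -
  obtain n0 es where w: "w = (n0, es)" by (cases w)
  from assms(6,7) w obtain u where walk: "is_walk D (n0, es)" and u: "u \<in> lbl_edges D es"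
    "u \<in> nfa_lang A" and n0: "n0 = s" and tg: "walk_tgt D (n0, es) = t"
    by (auto simp: walk_sem_def lbl_walk_def walk_src_def)
  have "u \<in> lang R" using u assms(3) by simp
  then obtain \<alpha> where al: "\<alpha> \<in> lang (linearise R)" "map snd \<alpha> = u"
    using lift_lin[of u R 0] unfolding linearise_def by blast
  have len: "length u = length es" using u(1) unfolding lbl_edges_def by (simp add: list_all2_lengthD)
  define bt where "bt = zip es \<alpha>"
  have fst_bt: "map fst bt = es" using len al(2) unfolding bt_def by (metis length_map map_fst_zip)
  have snd_bt: "map snd bt = \<alpha>" using len al(2) unfolding bt_def by (metis length_map map_snd_zip)
  have lblok: "\<forall>p\<in>set bt. snd (snd p) \<in> lbl D (fst p)"
    using u(1) fst_bt snd_bt al(2) lbl_edges_bt[of bt D] by simp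
  have "distinct bt"
  proof (rule ccontr)
    assume "\<not> distinct bt"
    then obtain X Y Z p where dec: "bt = X @ [p] @ Y @ [p] @ Z" using not_distinct_decomp by blast
    define bt' where "bt' = X @ p # Z"
    define es' where "es' = map fst bt'"
    have "map snd bt' \<in> lang (linearise R)"
      using cut[OF linok_lin[of 0 R], where x="map snd X" and c="snd p" and y="map snd Y" and z="map snd Z"] al(1) snd_bt dec
      unfolding bt'_def linearise_def by simp
    then have "map snd (map snd bt') \<in> nfa_lang A"
      using lower_lin[of "map snd bt'" 0 R] assms(3) unfolding linearise_def by simp
    moreover have "map snd (map snd bt') \<in> lbl_edges D es'"
      unfolding es'_def lbl_edges_bt using lblok dec unfolding bt'_def by auto
    moreover have "is_walk D (n0, es')"
    proof -
      have c: "chain D n0 (map fst X @ fst p # map fst Y @ fst p # map fst Z)"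
        and v: "n0 \<in> verts D" and sub: "set es \<subseteq> edges D"
        using walk fst_bt dec by (auto simp: is_walk_def)
      from c have c1: "chain D n0 (map fst X @ [fst p])" and c2: "chain D (tgt D (fst p)) (map fst Y @ fst p # map fst Z)"
        using chain_split by metis+
      from c2 have "chain D (tgt D (fst p)) (map fst Z)" using chain_split by metis
      with c1 have "chain D n0 (map fst X @ [fst p] @ map fst Z)"
        using chain_split by (metis append_Cons append_Nil)
      moreover have "set es' \<subseteq> edges D" using sub fst_bt dec unfolding es'_def bt'_def by force
      ultimately show ?thesis using v unfolding is_walk_def es'_def bt'_def by simp
    qed
    moreover have "walk_tgt D (n0, es') = t"
      using tg fst_bt dec unfolding walk_tgt_def es'_def bt'_def by (cases Z) auto
    ultimately have "(n0, es') \<in> P" using assms(6) n0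
      by (auto simp: walk_sem_def lbl_walk_def walk_src_def)
    moreover have "walk_len (n0, es') < walk_len w"
      using w fst_bt dec unfolding walk_len_def es'_def bt'_def by auto
    ultimately show False using assms(8) by fastforce
  qed
  then have "binding_trail D R n0 bt"
    unfolding binding_trail_def using walk fst_bt snd_bt al u(1) by simp
  then show ?thesis unfolding bt_sem_def using w fst_bt by blast
qed

end
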